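(* Let $\mu>0$ and let $X$ have the skew-symmetric-Laplace-uniform density with parameter $\mu$ (defined in the context). For $a\in\mathbb{R}$, the mean deviation $\eta_a=E|X-a|$ is $$\eta_a=\begin{cases} -\left(1+\frac{2}{\mu}\right)e^{-\mu}+\left(\frac{2}{\mu}-a\right) & a<-\mu,\\[2pt] \frac{a}{\mu}e^{-\mu}+\left(\frac{a}{\mu}-\frac{2}{\mu}+1\right)e^{a}+\left(\frac{2}{\mu}-a\right) & -\mu\le a<0,\\[2pt] \frac{a}{\mu}e^{-\mu}+\left(\frac{a}{\mu}+\frac{2}{\mu}+1\right)e^{-a}+\left(a-\frac{2}{\mu}\right) & 0\le a<\mu,\\[2pt] \left(1+\frac{2}{\mu}\right)e^{-\mu}+2e^{-a}+\left(a-\frac{2}{\mu}\right) & a\ge\mu.\end{cases}$$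
   Context: For $\mu\in\mathbb{R}\setminus\{0\}$, the skew-symmetric-Laplace-uniform distribution $SSLUD(\mu)$ is the distribution on $\mathbb{R}$ with density $$g(x)=\begin{cases} 0 & \text{if } x/\mu<-1,\\ e^{-|x|}\left(\dfrac{x}{2\mu}+\dfrac12\right) & \text{if } -1\le x/\mu<1,\\ e^{-|x|} & \text{if } x/\mu\ge 1.\end{cases}$$ *)

theory Defs
  imports "HOL-Probability.Probability"
begin

definition sslud_density :: "real \<Rightarrow> real \<Rightarrow> real" where
  "sslud_density \<mu> x =
     (if x / \<mu> < -1 then 0
      else if x / \<mu> < 1 then exp (- \<bar>x\<bar>) * (x / (2 * \<mu>) + 1 / 2)
      else exp (- \<bar>x\<bar>))"

end

theory Submission
  imports Defs "HOL-Real_Asymp.Real_Asymp"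
begin

definition Gp :: "real \<Rightarrow> real \<Rightarrow> real \<Rightarrow> real \<Rightarrow> real" where
  "Gp \<alpha> \<beta> \<gamma> x = (\<alpha> * x^2 + (\<beta> - 2*\<alpha>) * x + (\<gamma> - \<beta> + 2*\<alpha>)) * exp x"
definition Gn :: "real \<Rightarrow> real \<Rightarrow> real \<Rightarrow> real \<Rightarrow> real" where
  "Gn \<alpha> \<beta> \<gamma> x = - (\<alpha> * x^2 + (\<beta> + 2*\<alpha>) * x + (\<gamma> + \<beta> + 2*\<alpha>)) * exp (-x)"

lemma Gp_deriv: "DERIV (Gp \<alpha> \<beta> \<gamma>) x :> (\<alpha> * x^2 + \<beta> * x + \<gamma>) * exp x"
  unfolding Gp_def
  by (auto intro!: derivative_eq_intros simp: algebra_simps power2_eq_square)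

lemma Gn_deriv: "DERIV (Gn \<alpha> \<beta> \<gamma>) x :> (\<alpha> * x^2 + \<beta> * x + \<gamma>) * exp (-x)"
  unfolding Gn_def
  by (auto intro!: derivative_eq_intros simp: algebra_simps power2_eq_square)

lemma L_pos:
  assumes "p \<le> q" "\<And>x. x \<in> {p..q} \<Longrightarrow> 0 \<le> \<alpha> * x^2 + \<beta> * x + \<gamma>"
  shows "(\<integral>\<^sup>+x. ennreal ((\<alpha> * x^2 + \<beta> * x + \<gamma>) * exp x) * indicator {p..q} x \<partial>lborel)
          = ennreal (Gp \<alpha> \<beta> \<gamma> q - Gp \<alpha> \<beta> \<gamma> p)"
    "Gp \<alpha> \<beta> \<gamma> p \<le> Gp \<alpha> \<beta> \<gamma> q"
proof -
  show "(\<integral>\<^sup>+x. ennreal ((\<alpha> * x^2 + \<beta> * x + \<gamma>) * exp x) * indicator {p..q} x \<partial>lborel)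
          = ennreal (Gp \<alpha> \<beta> \<gamma> q - Gp \<alpha> \<beta> \<gamma> p)"
    by (rule nn_integral_FTC_Icc) (auto intro!: Gp_deriv mult_nonneg_nonneg assms)
  show "Gp \<alpha> \<beta> \<gamma> p \<le> Gp \<alpha> \<beta> \<gamma> q"
    apply (rule DERIV_nonneg_imp_nondecreasing[OF assms(1)])
    subgoal for x
      apply (rule exI[of _ "(\<alpha> * x^2 + \<beta> * x + \<gamma>) * exp x"])
      using assms(2)[of x] by (auto intro!: Gp_deriv)
    done
qed

lemma L_neg:
  assumes "p \<le> q" "\<And>x. x \<in> {p..q} \<Longrightarrow> 0 \<le> \<alpha> * x^2 + \<beta> * x + \<gamma>"
  shows "(\<integral>\<^sup>+x. ennreal ((\<alpha> * x^2 + \<beta> * x + \<gamma>) * exp (-x)) * indicator {p..q} x \<partial>lborel)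
          = ennreal (Gn \<alpha> \<beta> \<gamma> q - Gn \<alpha> \<beta> \<gamma> p)"
    "Gn \<alpha> \<beta> \<gamma> p \<le> Gn \<alpha> \<beta> \<gamma> q"
proof -
  show "(\<integral>\<^sup>+x. ennreal ((\<alpha> * x^2 + \<beta> * x + \<gamma>) * exp (-x)) * indicator {p..q} x \<partial>lborel)
          = ennreal (Gn \<alpha> \<beta> \<gamma> q - Gn \<alpha> \<beta> \<gamma> p)"
    by (rule nn_integral_FTC_Icc) (auto intro!: Gn_deriv mult_nonneg_nonneg assms)
  show "Gn \<alpha> \<beta> \<gamma> p \<le> Gn \<alpha> \<beta> \<gamma> q"
    apply (rule DERIV_nonneg_imp_nondecreasing[OF assms(1)])
    subgoal for x
      apply (rule exI[of _ "(\<alpha> * x^2 + \<beta> * x + \<gamma>) * exp (- x)"])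
      using assms(2)[of x] by (auto intro!: Gn_deriv)
    done
qed

lemma Gn_lim: "(Gn \<alpha> \<beta> \<gamma> \<longlongrightarrow> 0) at_top"
  unfolding Gn_def by real_asymp

lemma L_tail:
  assumes "\<And>x. p \<le> x \<Longrightarrow> 0 \<le> \<beta> * x + \<gamma>"
  shows "(\<integral>\<^sup>+x. ennreal ((0 * x^2 + \<beta> * x + \<gamma>) * exp (-x)) * indicator {p..} x \<partial>lborel)
          = ennreal (0 - Gn 0 \<beta> \<gamma> p)"
    "Gn 0 \<beta> \<gamma> p \<le> 0"
proof -
  show "(\<integral>\<^sup>+x. ennreal ((0 * x^2 + \<beta> * x + \<gamma>) * exp (-x)) * indicator {p..} x \<partial>lborel)
          = ennreal (0 - Gn 0 \<beta> \<gamma> p)"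
    using Gn_deriv[of 0 \<beta> \<gamma>]
    by (intro nn_integral_FTC_atLeast) (auto intro!: mult_nonneg_nonneg assms Gn_lim)
  have "Gn 0 \<beta> \<gamma> p \<le> Gn 0 \<beta> \<gamma> y" if "p \<le> y" for y
    apply (rule DERIV_nonneg_imp_nondecreasing[OF that])
    subgoal for x
      apply (rule exI[of _ "(\<beta> * x + \<gamma>) * exp (- x)"])
      using assms[of x] Gn_deriv[of 0 \<beta> \<gamma> x] that by auto
    done
  then show "Gn 0 \<beta> \<gamma> p \<le> 0"
    by (intro tendsto_lowerbound[OF Gn_lim]) (auto simp: eventually_at_top_linorder)
qed

lemma S1:
  fixes f :: "real \<Rightarrow> ennreal"
  assumes [measurable]: "f \<in> borel_measurable borel" and "p \<le> c" "c \<le> q"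
  shows "(\<integral>\<^sup>+x. f x * indicator {p..q} x \<partial>lborel)
     = (\<integral>\<^sup>+x. f x * indicator {p..c} x \<partial>lborel) + (\<integral>\<^sup>+x. f x * indicator {c..q} x \<partial>lborel)"
proof -
  have "(\<integral>\<^sup>+x. f x * indicator {p..q} x \<partial>lborel)
     = (\<integral>\<^sup>+x. f x * indicator {p..c} x + f x * indicator {c..q} x \<partial>lborel)"
    using AE_lborel_singleton[of c] assms(2,3)
    by (intro nn_integral_cong_AE) (auto elim!: eventually_mono split: split_indicator)
  also have "\<dots> = (\<integral>\<^sup>+x. f x * indicator {p..c} x \<partial>lborel) + (\<integral>\<^sup>+x. f x * indicator {c..q} x \<partial>lborel)"
    by (rule nn_integral_add) auto
  finally show ?thesis .
qed

lemma S2: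
  fixes f :: "real \<Rightarrow> ennreal"
  assumes [measurable]: "f \<in> borel_measurable borel" and "p \<le> c"
  shows "(\<integral>\<^sup>+x. f x * indicator {p..} x \<partial>lborel)
     = (\<integral>\<^sup>+x. f x * indicator {p..c} x \<partial>lborel) + (\<integral>\<^sup>+x. f x * indicator {c..} x \<partial>lborel)"
proof -
  have "(\<integral>\<^sup>+x. f x * indicator {p..} x \<partial>lborel)
     = (\<integral>\<^sup>+x. f x * indicator {p..c} x + f x * indicator {c..} x \<partial>lborel)"
    using AE_lborel_singleton[of c] assms(2)
    by (intro nn_integral_cong_AE) (auto elim!: eventually_mono split: split_indicator)
  also have "\<dots> = (\<integral>\<^sup>+x. f x * indicator {p..c} x \<partial>lborel) + (\<integral>\<^sup>+x. f x * indicator {c..} x \<partial>lborel)"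
    by (rule nn_integral_add) auto
  finally show ?thesis .
qed

lemma dens_meas: "sslud_density \<mu> \<in> borel_measurable borel"
  unfolding sslud_density_def by measurable

lemma cong_piece:
  assumes "\<And>x. x \<in> A \<Longrightarrow> f x = h x"
  shows "(\<integral>\<^sup>+x. ennreal (f x) * indicator A x \<partial>lborel) = (\<integral>\<^sup>+x. ennreal (h x) * indicator A x \<partial>lborel)"
  using assms by (intro nn_integral_cong) (auto split: split_indicator)

lemma D1: "\<mu> > 0 \<Longrightarrow> x < -\<mu> \<Longrightarrow> sslud_density \<mu> x = 0"
  unfolding sslud_density_def by (auto simp: field_simps)
lemma D2: "\<mu> > 0 \<Longrightarrow> -\<mu> \<le> x \<Longrightarrow> x \<le> 0 \<Longrightarrow> sslud_density \<mu> x = exp x * (x / (2*\<mu>) + 1/2)"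
  unfolding sslud_density_def by (auto simp: field_simps)
lemma D3: "\<mu> > 0 \<Longrightarrow> 0 \<le> x \<Longrightarrow> x \<le> \<mu> \<Longrightarrow> sslud_density \<mu> x = exp (-x) * (x / (2*\<mu>) + 1/2)"
  unfolding sslud_density_def by (auto simp: field_simps)
lemma D4: "\<mu> > 0 \<Longrightarrow> \<mu> \<le> x \<Longrightarrow> sslud_density \<mu> x = exp (-x)"
  unfolding sslud_density_def by (auto simp: field_simps)

lemma poly_id: "(\<mu>::real) > 0 \<Longrightarrow> s/(2*\<mu>)*x^2 + s*(1/2 - a/(2*\<mu>))*x + -(s*a/2) = s*(x-a)*(x/(2*\<mu>)+1/2)"
  by (simp add: field_simps power2_eq_square)

lemma PA:
  assumes "\<mu> > 0" "-\<mu> \<le> p" "p \<le> q" "q \<le> 0" "\<forall>x\<in>{p..q}. \<bar>x - a\<bar> = s * (x - a)"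
  shows "(\<integral>\<^sup>+x. ennreal (sslud_density \<mu> x * \<bar>x - a\<bar>) * indicator {p..q} x \<partial>lborel)
     = ennreal (Gp (s/(2*\<mu>)) (s*(1/2 - a/(2*\<mu>))) (-(s*a/2)) q - Gp (s/(2*\<mu>)) (s*(1/2 - a/(2*\<mu>))) (-(s*a/2)) p)"
    "Gp (s/(2*\<mu>)) (s*(1/2 - a/(2*\<mu>))) (-(s*a/2)) p \<le> Gp (s/(2*\<mu>)) (s*(1/2 - a/(2*\<mu>))) (-(s*a/2)) q"
proof -
  have nn: "0 \<le> s/(2*\<mu>)*x^2 + s*(1/2 - a/(2*\<mu>))*x + -(s*a/2)" if "x \<in> {p..q}" for x
  proof -
    have "0 \<le> s*(x-a)" using assms(5)[rule_format, OF that] by (metis abs_ge_zero)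
    moreover have "0 \<le> x/(2*\<mu>)+1/2" using that assms by (simp add: field_simps)
    ultimately show ?thesis unfolding poly_id[OF assms(1)] by (rule mult_nonneg_nonneg)
  qed
  have "(\<integral>\<^sup>+x. ennreal (sslud_density \<mu> x * \<bar>x - a\<bar>) * indicator {p..q} x \<partial>lborel)
    = (\<integral>\<^sup>+x. ennreal ((s/(2*\<mu>)*x^2 + s*(1/2 - a/(2*\<mu>))*x + -(s*a/2)) * exp x) * indicator {p..q} x \<partial>lborel)"
    apply (rule cong_piece)
    subgoal for x using assms(5)[rule_format, of x] assms(1-4) by (simp add: D2) (simp add: field_simps power2_eq_square)
    done
  also have "\<dots> = ennreal (Gp (s/(2*\<mu>)) (s*(1/2 - a/(2*\<mu>))) (-(s*a/2)) q - Gp (s/(2*\<mu>)) (s*(1/2 - a/(2*\<mu>))) (-(s*a/2)) p)"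
    by (rule L_pos(1)) (use assms nn in auto)
  finally show "(\<integral>\<^sup>+x. ennreal (sslud_density \<mu> x * \<bar>x - a\<bar>) * indicator {p..q} x \<partial>lborel)
     = ennreal (Gp (s/(2*\<mu>)) (s*(1/2 - a/(2*\<mu>))) (-(s*a/2)) q - Gp (s/(2*\<mu>)) (s*(1/2 - a/(2*\<mu>))) (-(s*a/2)) p)" .
  show "Gp (s/(2*\<mu>)) (s*(1/2 - a/(2*\<mu>))) (-(s*a/2)) p \<le> Gp (s/(2*\<mu>)) (s*(1/2 - a/(2*\<mu>))) (-(s*a/2)) q"
    by (rule L_pos(2)) (use assms nn in auto)
qed

lemma PB:
  assumes "\<mu> > 0" "0 \<le> p" "p \<le> q" "q \<le> \<mu>" "\<forall>x\<in>{p..q}. \<bar>x - a\<bar> = s * (x - a)"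
  shows "(\<integral>\<^sup>+x. ennreal (sslud_density \<mu> x * \<bar>x - a\<bar>) * indicator {p..q} x \<partial>lborel)
     = ennreal (Gn (s/(2*\<mu>)) (s*(1/2 - a/(2*\<mu>))) (-(s*a/2)) q - Gn (s/(2*\<mu>)) (s*(1/2 - a/(2*\<mu>))) (-(s*a/2)) p)"
    "Gn (s/(2*\<mu>)) (s*(1/2 - a/(2*\<mu>))) (-(s*a/2)) p \<le> Gn (s/(2*\<mu>)) (s*(1/2 - a/(2*\<mu>))) (-(s*a/2)) q"
proof -
  have nn: "0 \<le> s/(2*\<mu>)*x^2 + s*(1/2 - a/(2*\<mu>))*x + -(s*a/2)" if "x \<in> {p..q}" for x
  proof -
    have "0 \<le> s*(x-a)" using assms(5)[rule_format, OF that] by (metis abs_ge_zero)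
    moreover have "0 \<le> x/(2*\<mu>)+1/2" using that assms by (simp add: field_simps)
    ultimately show ?thesis unfolding poly_id[OF assms(1)] by (rule mult_nonneg_nonneg)
  qed
  have "(\<integral>\<^sup>+x. ennreal (sslud_density \<mu> x * \<bar>x - a\<bar>) * indicator {p..q} x \<partial>lborel)
    = (\<integral>\<^sup>+x. ennreal ((s/(2*\<mu>)*x^2 + s*(1/2 - a/(2*\<mu>))*x + -(s*a/2)) * exp (-x)) * indicator {p..q} x \<partial>lborel)"
    apply (rule cong_piece)
    subgoal for x using assms(5)[rule_format, of x] assms(1-4) by (simp add: D3) (simp add: field_simps power2_eq_square)
    done
  also have "\<dots> = ennreal (Gn (s/(2*\<mu>)) (s*(1/2 - a/(2*\<mu>))) (-(s*a/2)) q - Gn (s/(2*\<mu>)) (s*(1/2 - a/(2*\<mu>))) (-(s*a/2)) p)"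
    by (rule L_neg(1)) (use assms nn in auto)
  finally show "(\<integral>\<^sup>+x. ennreal (sslud_density \<mu> x * \<bar>x - a\<bar>) * indicator {p..q} x \<partial>lborel)
     = ennreal (Gn (s/(2*\<mu>)) (s*(1/2 - a/(2*\<mu>))) (-(s*a/2)) q - Gn (s/(2*\<mu>)) (s*(1/2 - a/(2*\<mu>))) (-(s*a/2)) p)" .
  show "Gn (s/(2*\<mu>)) (s*(1/2 - a/(2*\<mu>))) (-(s*a/2)) p \<le> Gn (s/(2*\<mu>)) (s*(1/2 - a/(2*\<mu>))) (-(s*a/2)) q"
    by (rule L_neg(2)) (use assms nn in auto)
qed

lemma PC:
  assumes "\<mu> > 0" "\<mu> \<le> p" "p \<le> q" "\<forall>x\<in>{p..q}. \<bar>x - a\<bar> = s * (x - a)"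
  shows "(\<integral>\<^sup>+x. ennreal (sslud_density \<mu> x * \<bar>x - a\<bar>) * indicator {p..q} x \<partial>lborel)
     = ennreal (Gn 0 s (-(s*a)) q - Gn 0 s (-(s*a)) p)"
    "Gn 0 s (-(s*a)) p \<le> Gn 0 s (-(s*a)) q"
proof -
  have nn: "0 \<le> 0*x^2 + s*x + -(s*a)" if "x \<in> {p..q}" for x
  proof -
    have "0 \<le> s*(x-a)" using assms(4)[rule_format, OF that] by (metis abs_ge_zero)
    then show ?thesis by (simp add: algebra_simps)
  qed
  have "(\<integral>\<^sup>+x. ennreal (sslud_density \<mu> x * \<bar>x - a\<bar>) * indicator {p..q} x \<partial>lborel)
    = (\<integral>\<^sup>+x. ennreal ((0*x^2 + s*x + -(s*a)) * exp (-x)) * indicator {p..q} x \<partial>lborel)"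
    apply (rule cong_piece)
    subgoal for x using assms(4)[rule_format, of x] assms(1-3) by (simp add: D4) (simp add: algebra_simps)
    done
  also have "\<dots> = ennreal (Gn 0 s (-(s*a)) q - Gn 0 s (-(s*a)) p)"
    by (rule L_neg(1)) (use assms nn in auto)
  finally show "(\<integral>\<^sup>+x. ennreal (sslud_density \<mu> x * \<bar>x - a\<bar>) * indicator {p..q} x \<partial>lborel)
     = ennreal (Gn 0 s (-(s*a)) q - Gn 0 s (-(s*a)) p)" .
  show "Gn 0 s (-(s*a)) p \<le> Gn 0 s (-(s*a)) q"
    by (rule L_neg(2)) (use assms nn in auto)
qed

lemma PT:
  assumes "\<mu> > 0" "\<mu> \<le> p" "a \<le> p"
  shows "(\<integral>\<^sup>+x. ennreal (sslud_density \<mu> x * \<bar>x - a\<bar>) * indicator {p..} x \<partial>lborel)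
     = ennreal (0 - Gn 0 1 (-a) p)"
    "Gn 0 1 (-a) p \<le> 0"
proof -
  have "(\<integral>\<^sup>+x. ennreal (sslud_density \<mu> x * \<bar>x - a\<bar>) * indicator {p..} x \<partial>lborel)
    = (\<integral>\<^sup>+x. ennreal ((0*x^2 + 1*x + -a) * exp (-x)) * indicator {p..} x \<partial>lborel)"
    by (rule cong_piece) (use assms in \<open>auto simp: D4 algebra_simps\<close>)
  also have "\<dots> = ennreal (0 - Gn 0 1 (-a) p)"
    by (rule L_tail(1)) (use assms in auto)
  finally show "(\<integral>\<^sup>+x. ennreal (sslud_density \<mu> x * \<bar>x - a\<bar>) * indicator {p..} x \<partial>lborel)
     = ennreal (0 - Gn 0 1 (-a) p)" .
  show "Gn 0 1 (-a) p \<le> 0"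
    by (rule L_tail(2)) (use assms in auto)
qed

lemma dens_nonneg: assumes "\<mu> > 0" shows "0 \<le> sslud_density \<mu> x"
proof -
  have "\<not> x/\<mu> < -1 \<Longrightarrow> 0 \<le> x/(2*\<mu>)+1/2" using assms by (simp add: field_simps)
  then show ?thesis unfolding sslud_density_def by auto
qed

lemma enn3: "0 \<le> A \<Longrightarrow> 0 \<le> B \<Longrightarrow> 0 \<le> C \<Longrightarrow> enn2real (ennreal A + ennreal B + ennreal C) = A + B + C"
  by (simp add: ennreal_plus[symmetric] del: ennreal_plus)
lemma enn4: "0 \<le> A \<Longrightarrow> 0 \<le> B \<Longrightarrow> 0 \<le> C \<Longrightarrow> 0 \<le> D \<Longrightarrow> enn2real (ennreal A + ennreal B + ennreal C + ennreal D) = A + B + C + D"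
  by (simp add: ennreal_plus[symmetric] del: ennreal_plus)

theorem mainTheorem7:
  fixes M :: "'a measure" and X :: "'a \<Rightarrow> real" and \<mu> a :: real
  assumes "prob_space M"
    and "\<mu> > 0"
    and "distributed M lborel X (\<lambda>x. ennreal (sslud_density \<mu> x))"
  shows "prob_space.expectation M (\<lambda>\<omega>. \<bar>X \<omega> - a\<bar>) =
    (if a < - \<mu> then - (1 + 2 / \<mu>) * exp (- \<mu>) + (2 / \<mu> - a)
     else if a < 0 then a / \<mu> * exp (- \<mu>) + (a / \<mu> - 2 / \<mu> + 1) * exp a + (2 / \<mu> - a)
     else if a < \<mu> then a / \<mu> * exp (- \<mu>) + (a / \<mu> + 2 / \<mu> + 1) * exp (- a) + (a - 2 / \<mu>)
     else (1 + 2 / \<mu>) * exp (- \<mu>) + 2 * exp (- a) + (a - 2 / \<mu>))"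
proof -
  have mu: "\<mu> > 0" by fact
  have Xm: "X \<in> measurable M lborel" using assms(3) by (rule distributed_measurable)
  then have Xb[measurable]: "X \<in> borel_measurable M" by simp
  have fm[measurable]: "(\<lambda>x. ennreal (sslud_density \<mu> x * \<bar>x - a\<bar>)) \<in> borel_measurable borel"
    using dens_meas[of \<mu>] by measurable
  define I where "I = (\<lambda>A. (\<integral>\<^sup>+x. ennreal (sslud_density \<mu> x * \<bar>x - a\<bar>) * indicator A x \<partial>lborel))"
  have "prob_space.expectation M (\<lambda>\<omega>. \<bar>X \<omega> - a\<bar>) = enn2real (\<integral>\<^sup>+\<omega>. ennreal \<bar>X \<omega> - a\<bar> \<partial>M)"
    by (rule integral_eq_nn_integral) auto
  also have "(\<integral>\<^sup>+\<omega>. ennreal \<bar>X \<omega> - a\<bar> \<partial>M) = (\<integral>\<^sup>+x. ennreal (sslud_density \<mu> x) * ennreal \<bar>x - a\<bar> \<partial>lborel)"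
    using distributed_nn_integral[OF assms(3), of "\<lambda>x. ennreal \<bar>x - a\<bar>"] by simp
  also have "\<dots> = I {-\<mu>..}"
    unfolding I_def
    by (intro nn_integral_cong) (auto simp: D1 mu ennreal_mult'[symmetric] dens_nonneg split: split_indicator)
  finally have E: "prob_space.expectation M (\<lambda>\<omega>. \<bar>X \<omega> - a\<bar>) = enn2real (I {-\<mu>..})" .
  have S1': "I {p..q} = I {p..c} + I {c..q}" if "p \<le> c" "c \<le> q" for p c q
    unfolding I_def by (rule S1[OF fm that])
  have S2': "I {p..} = I {p..c} + I {c..}" if "p \<le> c" for p c
    unfolding I_def by (rule S2[OF fm that])
  consider "a < -\<mu>" | "-\<mu> \<le> a" "a < 0" | "0 \<le> a" "a < \<mu>" | "\<mu> \<le> a" by linarith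
  then show ?thesis
  proof cases
    case 1
    have "I {-\<mu>..} = I {-\<mu>..0} + I {0..\<mu>} + I {\<mu>..}"
      using S2'[of "-\<mu>" 0] S2'[of 0 \<mu>] mu by (simp add: add.assoc)
    note X = this[unfolded I_def]
    have m0: "-\<mu> \<le> 0" "0 \<le> \<mu>" using mu by auto
    have h1: "\<forall>x\<in>{-\<mu>..0}. \<bar>x-a\<bar> = 1*(x-a)" "\<forall>x\<in>{0..\<mu>}. \<bar>x-a\<bar> = 1*(x-a)"
      using 1 by auto
    note P1 = PA[where a=a and s=1, OF mu order.refl m0(1) order.refl h1(1)]
    note P2 = PB[where a=a and s=1, OF mu order.refl m0(2) order.refl h1(2)]
    have am: "a \<le> \<mu>" using 1 mu by auto
    note P3 = PT[OF mu order.refl am]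
    show ?thesis using 1 mu unfolding E I_def X P1(1) P2(1) P3(1)
      apply (subst enn3)
      using P1(2) P2(2) P3(2) 1 apply auto[4]
      apply (simp add: Gp_def Gn_def field_simps power2_eq_square)
      done
  next
    case 2
    have "I {-\<mu>..} = I {-\<mu>..a} + I {a..0} + I {0..\<mu>} + I {\<mu>..}"
      using S2'[of "-\<mu>" 0] S1'[of "-\<mu>" a 0] S2'[of 0 \<mu>] mu 2 by (simp add: add.assoc)
    note X = this[unfolded I_def]
    have m0: "-\<mu> \<le> a" "a \<le> 0" "0 \<le> \<mu>" "a \<le> \<mu>" using mu 2 by auto
    have h1: "\<forall>x\<in>{-\<mu>..a}. \<bar>x-a\<bar> = (-1)*(x-a)" "\<forall>x\<in>{a..0}. \<bar>x-a\<bar> = 1*(x-a)"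
       "\<forall>x\<in>{0..\<mu>}. \<bar>x-a\<bar> = 1*(x-a)"
      using 2 by auto
    note P1 = PA[where a=a and s="-1", OF mu order.refl m0(1) m0(2) h1(1)]
    note P2 = PA[where a=a and s=1, OF mu m0(1) m0(2) order.refl h1(2)]
    note P3 = PB[where a=a and s=1, OF mu order.refl m0(3) order.refl h1(3)]
    note P4 = PT[OF mu order.refl m0(4)]
    show ?thesis using 2 mu unfolding E I_def X P1(1) P2(1) P3(1) P4(1)
      apply (subst enn4)
      using P1(2) P2(2) P3(2) P4(2) 2 apply auto[5]
      apply (simp add: Gp_def Gn_def field_simps power2_eq_square)
      done
  next
    case 3
    have "I {-\<mu>..} = I {-\<mu>..0} + I {0..a} + I {a..\<mu>} + I {\<mu>..}"
      using S2'[of "-\<mu>" 0] S1'[of 0 a \<mu>] S2'[of 0 \<mu>] mu 3 by (simp add: add.assoc)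
    note X = this[unfolded I_def]
    have m0: "-\<mu> \<le> 0" "0 \<le> a" "a \<le> \<mu>" using mu 3 by auto
    have h1: "\<forall>x\<in>{-\<mu>..0}. \<bar>x-a\<bar> = (-1)*(x-a)" "\<forall>x\<in>{0..a}. \<bar>x-a\<bar> = (-1)*(x-a)"
       "\<forall>x\<in>{a..\<mu>}. \<bar>x-a\<bar> = 1*(x-a)"
      using 3 by auto
    note P1 = PA[where a=a and s="-1", OF mu order.refl m0(1) order.refl h1(1)]
    note P2 = PB[where a=a and s="-1", OF mu order.refl m0(2) m0(3) h1(2)]
    note P3 = PB[where a=a and s=1, OF mu m0(2) m0(3) order.refl h1(3)]
    note P4 = PT[OF mu order.refl m0(3)]
    show ?thesis using 3 mu unfolding E I_def X P1(1) P2(1) P3(1) P4(1)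
      apply (subst enn4)
      using P1(2) P2(2) P3(2) P4(2) 3 apply auto[5]
      apply (simp add: Gp_def Gn_def field_simps power2_eq_square)
      done
  next
    case 4
    have "I {-\<mu>..} = I {-\<mu>..0} + I {0..\<mu>} + I {\<mu>..a} + I {a..}"
      using S2'[of "-\<mu>" 0] S2'[of 0 \<mu>] S2'[of \<mu> a] mu 4 by (simp add: add.assoc)
    note X = this[unfolded I_def]
    have m0: "-\<mu> \<le> 0" "0 \<le> \<mu>" "\<mu> \<le> a" using mu 4 by auto
    have h1: "\<forall>x\<in>{-\<mu>..0}. \<bar>x-a\<bar> = (-1)*(x-a)" "\<forall>x\<in>{0..\<mu>}. \<bar>x-a\<bar> = (-1)*(x-a)"
       "\<forall>x\<in>{\<mu>..a}. \<bar>x-a\<bar> = (-1)*(x-a)"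
      using 4 by auto
    note P1 = PA[where a=a and s="-1", OF mu order.refl m0(1) order.refl h1(1)]
    note P2 = PB[where a=a and s="-1", OF mu order.refl m0(2) order.refl h1(2)]
    note P3 = PC[where a=a and s="-1", OF mu order.refl m0(3) h1(3)]
    note P4 = PT[OF mu m0(3) order.refl]
    show ?thesis using 4 mu unfolding E I_def X P1(1) P2(1) P3(1) P4(1)
      apply (subst enn4)
      using P1(2) P2(2) P3(2) P4(2) 4 apply auto[5]
      apply (simp add: Gp_def Gn_def field_simps power2_eq_square)
      done
  qed
qed

end
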